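(* Under the CME setup, assume (B): there exist $\mathfrak f\in\mathcal G\otimes\mathcal H$ and $c\in\mathcal G$ with $\mathfrak m(x)=\mathfrak f(x)+c$ for $\mathbb P_X$-a.e. $x$ (this holds in particular under (A): $\mathfrak m\in\mathcal G\otimes\mathcal H$). Then the operator $C_V^\dagger C_{VU}:\mathcal G\to\mathcal H$ is everywhere defined and bounded, and $$\mathbb E[U|X]=\mu_U+(C_V^\dagger C_{VU})^*(\varphi(X)-\mu_V)\quad\text{a.s.}$$
   Context: CME setup: - $X:\Omega\to\mathcal X$ and $Y:\Omega\to\mathcal Y$ are random variables, with $\mathcal X$ a measurable space and $\mathcal Y$ a Borel space. - $k$ and $\ell$ are measurable symmetric positive definite kernels on $\mathcal X$ and $\mathcal Y$, with separable RKHSs $\mathcal H$ and $\mathcal G$ respectively. - The feature maps are $\varphi(x)=k(x,\cdot)$, which is assumed injective, and $\psi(y)=\ell(y,\cdot)$. - $V:=\varphi(X)\in L^2(\mathbb P;\mathcal H)$ and $U:=\psi(Y)\in L^2(\mathbb P;\mathcal G)$, with means $\mu_V,\mu_U$. - For $h\in\mathcal H$: $\|h\|_{\mathcal H}=0$ iff $h=0$ $\mathbb P_X$-a.e. - $\mathfrak m(x)=\mathbb E[U|X=x]\in L^2(\mathbb P_X;\mathcal G)$. - $\mathcal G\otimes\mathcal H$ is the Hilbert tensor product, viewed as functions $\mathcal X\to\mathcal G$ via $(g\otimes h)(x)=h(x)g$. - $C_{VU}=\mathbb E[(V-\mu_V)\otimes(U-\mu_U)]$ and $C_V=\mathbb E[(V-\mu_V)\otimes(V-\mu_V)]$,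 where $(a\otimes b)(b')=\langle b,b'\rangle a$. - $\dagger$ denotes the Moore–Penrose pseudo-inverse. *)

theory Defs
  imports "HOL-Probability.Probability"
begin

definition orthonormal_basis :: "'a::real_inner set \<Rightarrow> bool" where
  "orthonormal_basis B \<longleftrightarrow>
     (\<forall>e\<in>B. norm e = 1) \<and> (\<forall>e\<in>B. \<forall>e'\<in>B. e \<noteq> e' \<longrightarrow> inner e e' = 0) \<and>
     closure (span B) = UNIV"

text \<open>The Hilbert tensor product G (x) H is
  identified with them via  g (x) h  |->  (h' |-> <h,h'> g); under this identification
  the function  x |-> f(x)  of an element f of G (x) H is  x |-> F (phi x).\<close>
definition hilbert_schmidt :: "('h::real_inner \<Rightarrow> 'g::real_inner) \<Rightarrow> bool" where
  "hilbert_schmidt F \<longleftrightarrow> bounded_linear F \<and>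
     (\<exists>B. orthonormal_basis B \<and> (\<lambda>e. (norm (F e))\<^sup>2) summable_on B)"

text \<open>Moore--Penrose pseudo-inverse of a bounded operator T (possibly unbounded,
  defined on  ran T + (ran T)^perp ): the minimal-norm least-squares solution,
  i.e. the unique x in (ker T)^perp with  T x - y  orthogonal to ran T.\<close>
definition mp_dom :: "('a::real_inner \<Rightarrow> 'b::real_inner) \<Rightarrow> 'b set" where
  "mp_dom T = {r + s | r s. r \<in> range T \<and> s \<in> orthogonal_comp (range T)}"

definition mp_inv :: "('a::real_inner \<Rightarrow> 'b::real_inner) \<Rightarrow> 'b \<Rightarrow> 'a" where
  "mp_inv T y = (THE x. x \<in> orthogonal_comp (T -` {0}) \<and> y - T x \<in> orthogonal_comp (range T))"

text \<open>Cross-covariance operator  C_AB = E[(A - mu_A) (x) (B - mu_B)],  (a (x) b) b' = <b,b'> a.\<close>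
definition cross_cov ::
  "'w measure \<Rightarrow> ('w \<Rightarrow> 'a::{real_inner,banach,second_countable_topology})
     \<Rightarrow> ('w \<Rightarrow> 'b::{real_inner,banach,second_countable_topology}) \<Rightarrow> 'b \<Rightarrow> 'a" where
  "cross_cov M A B b =
     (LINT \<omega>|M. inner (B \<omega> - (LINT \<omega>'|M. B \<omega>')) b *\<^sub>R (A \<omega> - (LINT \<omega>'|M. A \<omega>')))"

text \<open>m is (a version of) x |-> E[U | X = x]: measurable and satisfying the defining
  identity E[1_A(X) U] = E[1_A(X) m(X)] for all measurable A.\<close>
definition is_cond_exp_given ::
  "'w measure \<Rightarrow> 'x measure \<Rightarrow> ('w \<Rightarrow> 'x)
     \<Rightarrow> ('w \<Rightarrow> 'g::{real_normed_vector,banach,second_countable_topology}) \<Rightarrow> ('x \<Rightarrow> 'g) \<Rightarrow> bool" where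
  "is_cond_exp_given M Mx X U m \<longleftrightarrow>
     m \<in> borel_measurable Mx \<and>
     (\<forall>A\<in>sets Mx. (LINT \<omega>|M. indicator A (X \<omega>) *\<^sub>R U \<omega>) = (LINT \<omega>|M. indicator A (X \<omega>) *\<^sub>R m (X \<omega>)))"

end

theory Submission
  imports Defs
begin


lemma proj_exists:
  fixes S :: "'a::{real_inner,complete_space} set"
  assumes sub: "subspace S" and cl: "closed S"
  shows "\<exists>p\<in>S. \<forall>y\<in>S. inner (x - p) y = 0"
proof -
  have ne: "S \<noteq> {}" using subspace_0[OF sub] by auto
  define d where "d = infdist x S"
  have d0: "d \<ge> 0" unfolding d_def by (simp add: infdist_nonneg)
  have "\<forall>n::nat. \<exists>s\<in>S. dist x s < sqrt (d\<^sup>2 + 1 / real (Suc n))"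
  proof
    fix n :: nat
    have "d < sqrt (d\<^sup>2 + 1 / real (Suc n))"
      by (rule real_less_rsqrt) simp
    then show "\<exists>s\<in>S. dist x s < sqrt (d\<^sup>2 + 1 / real (Suc n))"
      unfolding d_def infdist_notempty[OF ne] by (simp add: cINF_less_iff[OF ne])
  qed
  then obtain s where sS: "\<And>n. s n \<in> S" and sd: "\<And>n. dist x (s n) < sqrt (d\<^sup>2 + 1 / real (Suc n))"
    by metis
  have sd2: "(norm (x - s n))\<^sup>2 \<le> d\<^sup>2 + 1 / real (Suc n)" for n
  proof -
    have "norm (x - s n) \<le> sqrt (d\<^sup>2 + 1 / real (Suc n))" using sd[of n] by (simp add: dist_norm)
    hence "(norm (x - s n))\<^sup>2 \<le> (sqrt (d\<^sup>2 + 1 / real (Suc n)))\<^sup>2"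
      by (intro power_mono) auto
    also have "\<dots> = d\<^sup>2 + 1 / real (Suc n)" by (intro real_sqrt_pow2) simp
    finally show ?thesis .
  qed
  have dle: "d \<le> norm (x - y)" if "y \<in> S" for y
    unfolding d_def using infdist_le[OF that, of x] by (simp add: dist_norm)
  have par: "(norm (s m - s n))\<^sup>2 \<le> 2 / real (Suc n) + 2 / real (Suc m)" for m n
  proof -
    let ?a = "x - s n" and ?b = "x - s m"
    have mid: "(1/2) *\<^sub>R (s n + s m) \<in> S"
      using sS sub by (simp add: subspace_add subspace_scale)
    have "d \<le> norm (x - (1/2) *\<^sub>R (s n + s m))" using dle[OF mid] .
    hence "2 * d \<le> norm (?a + ?b)"
    proof -
      have "?a + ?b = 2 *\<^sub>R (x - (1/2) *\<^sub>R (s n + s m))" by (simp add: algebra_simps scaleR_2)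
      then have "norm (?a + ?b) = 2 * norm (x - (1/2) *\<^sub>R (s n + s m))" by simp
      then show ?thesis using \<open>d \<le> _\<close> by linarith
    qed
    hence h1: "4 * d\<^sup>2 \<le> (norm (?a + ?b))\<^sup>2"
    proof -
      have "(2 * d)\<^sup>2 \<le> (norm (?a + ?b))\<^sup>2" using \<open>2 * d \<le> _\<close> d0 by (intro power_mono) auto
      thus ?thesis by (simp add: power_mult_distrib)
    qed
    have pl: "(norm (?a - ?b))\<^sup>2 + (norm (?a + ?b))\<^sup>2 = 2 * (norm ?a)\<^sup>2 + 2 * (norm ?b)\<^sup>2"
      by (simp add: power2_norm_eq_inner inner_add_left inner_add_right inner_diff_left inner_diff_right inner_commute)
    have "?a - ?b = s m - s n" by simp
    then show ?thesis using pl h1 sd2[of n] sd2[of m] by simp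
  qed
  have "Cauchy s"
  proof (rule metric_CauchyI)
    fix e :: real assume "e > 0"
    obtain N :: nat where N: "4 / e\<^sup>2 < real N" using reals_Archimedean2 by blast
    show "\<exists>M. \<forall>m\<ge>M. \<forall>n\<ge>M. dist (s m) (s n) < e"
    proof (intro exI allI impI)
      fix m n assume mN: "m \<ge> N" and nN: "n \<ge> N"
      have "2 / real (Suc n) \<le> 2 / real (Suc N)" "2 / real (Suc m) \<le> 2 / real (Suc N)"
        using mN nN by (simp_all add: frac_le)
      hence "(norm (s m - s n))\<^sup>2 \<le> 4 / real (Suc N)" using par[of m n] by simp
      also have "\<dots> < e\<^sup>2"
      proof -
        have "4 / e\<^sup>2 < real (Suc N)" using N by simp
        thus ?thesis using \<open>e>0\<close> by (simp add: field_simps)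
      qed
      finally have "(norm (s m - s n))\<^sup>2 < e\<^sup>2" .
      then show "dist (s m) (s n) < e" using \<open>e>0\<close>
        by (simp add: dist_norm power_less_imp_less_base less_imp_le)
    qed
  qed
  then obtain p where lim: "s \<longlonglongrightarrow> p" using Cauchy_convergent_iff convergent_def by blast
  have pS: "p \<in> S" using closed_sequentially[OF cl] sS lim by blast
  have "(\<lambda>n. (norm (x - s n))\<^sup>2) \<longlonglongrightarrow> (norm (x - p))\<^sup>2"
    by (intro tendsto_intros lim)
  moreover have "(\<lambda>n. d\<^sup>2 + 1 / real (Suc n)) \<longlonglongrightarrow> d\<^sup>2 + 0"
    by (intro tendsto_intros LIMSEQ_inverse_real_of_nat[unfolded inverse_eq_divide])
  ultimately have pd: "(norm (x - p))\<^sup>2 \<le> d\<^sup>2"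
    using sd2 by (intro LIMSEQ_le) auto
  have opt: "(norm (x - p))\<^sup>2 \<le> (norm (x - y))\<^sup>2" if "y \<in> S" for y
    using pd dle[OF that] d0 by (meson order_trans power_mono)
  show ?thesis
  proof (intro bexI[OF _ pS] ballI)
    fix y assume yS: "y \<in> S"
    define a where "a = inner (x - p) y"
    define b where "b = inner y y"
    have b0: "b \<ge> 0" unfolding b_def by simp
    define t where "t = a / (b + 1)"
    have "p + t *\<^sub>R y \<in> S" using pS yS sub by (simp add: subspace_add subspace_scale)
    from opt[OF this]
    have "(norm (x - p))\<^sup>2 \<le> (norm ((x - p) - t *\<^sub>R y))\<^sup>2" by (simp add: algebra_simps)
    also have "\<dots> = (norm (x - p))\<^sup>2 - 2 * t * a + t * t * b"
      unfolding a_def b_def power2_norm_eq_inner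
      by (simp add: inner_diff_left inner_diff_right inner_commute algebra_simps)
    finally have "0 \<le> t * t * b - 2 * t * a" by simp
    hence "0 \<le> (b+1)^2 * (t * t * b - 2 * t * a)" by simp
    also have "(b+1)^2 * (t * t * b - 2 * t * a) = (t*(b+1))*(t*(b+1))*b - 2*(t*(b+1))*a*(b+1)"
      by (simp add: algebra_simps power2_eq_square)
    also have "t*(b+1) = a" unfolding t_def using b0 by simp
    also have "a * a * b - 2 * a * a * (b + 1) = - (a^2 * (b + 2))"
      by (simp add: algebra_simps power2_eq_square)
    finally have "a^2 * (b+2) \<le> 0" by simp
    hence "a^2 \<le> 0" using b0 by (smt (verit) mult_nonneg_nonneg zero_le_power2 mult_le_0_iff)
    thus "inner (x - p) y = 0" unfolding a_def by simp
  qed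
qed



definition hproj :: "'a::{real_inner,complete_space} set \<Rightarrow> 'a \<Rightarrow> 'a" where
  "hproj S x = (SOME p. p \<in> S \<and> (\<forall>y\<in>S. inner (x - p) y = 0))"

lemma hproj:
  fixes S :: "'a::{real_inner,complete_space} set"
  assumes "subspace S" "closed S"
  shows "hproj S x \<in> S" "\<And>y. y \<in> S \<Longrightarrow> inner (x - hproj S x) y = 0"
proof -
  have "\<exists>p. p \<in> S \<and> (\<forall>y\<in>S. inner (x - p) y = 0)" using proj_exists[OF assms] by blast
  hence "hproj S x \<in> S \<and> (\<forall>y\<in>S. inner (x - hproj S x) y = 0)"
    unfolding hproj_def by (rule someI_ex)
  thus "hproj S x \<in> S" "\<And>y. y \<in> S \<Longrightarrow> inner (x - hproj S x) y = 0" by auto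
qed

lemma hproj_unique:
  fixes S :: "'a::{real_inner,complete_space} set"
  assumes "subspace S" "closed S" "p \<in> S" "\<And>y. y \<in> S \<Longrightarrow> inner (x - p) y = 0"
  shows "hproj S x = p"
proof -
  let ?q = "hproj S x"
  have d: "?q - p \<in> S" using hproj(1)[OF assms(1,2)] assms(3) assms(1) by (simp add: subspace_diff)
  have "inner (?q - p) (?q - p) = inner (x - p) (?q - p) - inner (x - ?q) (?q - p)"
    by (simp add: inner_diff_left)
  also have "\<dots> = 0" using assms(4)[OF d] hproj(2)[OF assms(1,2) d] by simp
  finally show ?thesis by simp
qed

lemma hproj_linear:
  fixes S :: "'a::{real_inner,complete_space} set"
  assumes "subspace S" "closed S"
  shows "bounded_linear (hproj S)"
proof -
  note h = hproj[OF assms]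
  have add: "hproj S (x + y) = hproj S x + hproj S y" for x y
  proof (rule hproj_unique[OF assms])
    show "hproj S x + hproj S y \<in> S" using h(1) assms(1) by (simp add: subspace_add)
    fix z assume z: "z \<in> S"
    have e: "(x + y) - (hproj S x + hproj S y) = (x - hproj S x) + (y - hproj S y)" by simp
    show "inner ((x + y) - (hproj S x + hproj S y)) z = 0"
      unfolding e inner_add_left using h(2)[OF z] by simp
  qed
  have sc: "hproj S (r *\<^sub>R x) = r *\<^sub>R hproj S x" for r x
  proof (rule hproj_unique[OF assms])
    show "r *\<^sub>R hproj S x \<in> S" using h assms(1) by (simp add: subspace_scale)
    fix y assume "y \<in> S"
    have e: "r *\<^sub>R x - r *\<^sub>R hproj S x = r *\<^sub>R (x - hproj S x)" by (simp add: scaleR_diff_right)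
    show "inner (r *\<^sub>R x - r *\<^sub>R hproj S x) y = 0" unfolding e inner_scaleR_left using h(2)[OF \<open>y\<in>S\<close>] by simp
  qed
  have bd: "norm (hproj S x) \<le> norm x * 1" for x
  proof -
    define v where "v = x - hproj S x"
    define w where "w = hproj S x"
    have vw: "inner v w = 0" unfolding v_def w_def using h(2)[OF h(1)] .
    have "x = v + w" unfolding v_def w_def by simp
    hence "inner x x = inner v v + 2 * inner v w + inner w w"
      by (simp add: inner_add_left inner_add_right inner_commute[of w v])
    hence "(norm w)\<^sup>2 \<le> (norm x)\<^sup>2" using vw by (simp add: power2_norm_eq_inner)
    hence "norm w \<le> norm x" by (rule power2_le_imp_le[OF _ norm_ge_zero])
    thus ?thesis unfolding w_def by simp
  qed
  show ?thesis by (rule bounded_linear_intro[OF add sc bd])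
qed



lemma riesz:
  fixes f :: "'a::{real_inner,complete_space} \<Rightarrow> real"
  assumes bl: "bounded_linear f"
  shows "\<exists>z. \<forall>x. f x = inner z x"
proof (cases "\<forall>x. f x = 0")
  case True thus ?thesis by (intro exI[of _ 0]) simp
next
  case False
  then obtain x0 where fx0: "f x0 \<noteq> 0" by auto
  interpret f: bounded_linear f by fact
  define K where "K = f -` {0}"
  have subK: "subspace K" unfolding K_def subspace_def by (simp add: f.add f.scale)
  have clK: "closed K" unfolding K_def
    by (intro closed_vimage closed_singleton) (rule linear_continuous_on, rule bl)
  note h = hproj[OF subK clK]
  define w where "w = x0 - hproj K x0"
  have fw: "f w = f x0" using h(1)[of x0] unfolding w_def K_def by (simp add: f.diff)
  have wK: "inner w y = 0" if "y \<in> K" for y using h(2)[OF that] unfolding w_def by simp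
  have w0: "inner w w \<noteq> 0" using fw fx0 by auto
  show ?thesis
  proof (intro exI allI)
    fix x
    have "x - (f x / f w) *\<^sub>R w \<in> K" unfolding K_def using fw fx0 by (simp add: f.diff f.scale)
    from wK[OF this] have "inner w x = (f x / f w) * inner w w" by (simp add: inner_diff_right)
    thus "f x = inner ((f w / inner w w) *\<^sub>R w) x" using w0 fw fx0 by (simp add: field_simps)
  qed
qed

lemma adjoint_exists:
  fixes F :: "'a::{real_inner,complete_space} \<Rightarrow> 'b::real_inner"
  assumes "bounded_linear F"
  shows "\<And>x y. inner (F x) y = inner x (adjoint F y)"
proof -
  have "\<forall>y. \<exists>z. \<forall>x. inner (F x) y = inner z x"
  proof
    fix y
    have "bounded_linear (\<lambda>x. inner (F x) y)"
      using bounded_linear_compose[OF bounded_linear_inner_left assms] .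
    thus "\<exists>z. \<forall>x. inner (F x) y = inner z x" by (rule riesz)
  qed
  then obtain G where G: "\<forall>y. \<forall>x. inner (F x) y = inner (G y) x"
    by (subst (asm) choice_iff) blast
  hence "\<exists>f'. \<forall>x y. inner (F x) y = inner x (f' y)"
    by (intro exI[of _ G]) (simp add: inner_commute)
  hence "\<forall>x y. inner (F x) y = inner x (adjoint F y)" unfolding adjoint_def by (rule someI_ex)
  thus "\<And>x y. inner (F x) y = inner x (adjoint F y)" by blast
qed

lemma adjoint_bounded_linear:
  fixes F :: "'a::{real_inner,complete_space} \<Rightarrow> 'b::real_inner"
  assumes bl: "bounded_linear F"
  shows "bounded_linear (adjoint F)"
proof -
  note adj = adjoint_exists[OF bl]
  interpret F: bounded_linear F by fact
  obtain K where K: "K > 0" "\<And>x. norm (F x) \<le> norm x * K" using F.pos_bounded by blast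
  have add: "adjoint F (x + y) = adjoint F x + adjoint F y" for x y
    by (rule vector_eq_ldot[THEN iffD1], rule allI) (metis adj inner_add_right)
  have sc: "adjoint F (r *\<^sub>R x) = r *\<^sub>R adjoint F x" for r x
    by (rule vector_eq_ldot[THEN iffD1], rule allI) (metis adj inner_scaleR_right)
  have bd: "norm (adjoint F y) \<le> norm y * K" for y
  proof -
    let ?z = "adjoint F y"
    have "(norm ?z)\<^sup>2 = inner (F ?z) y" by (simp add: adj power2_norm_eq_inner)
    also have "\<dots> \<le> norm (F ?z) * norm y" by (rule norm_cauchy_schwarz)
    also have "\<dots> \<le> norm ?z * K * norm y" using K(2)[of ?z] by (simp add: mult_right_mono)
    finally have "norm ?z * norm ?z \<le> norm ?z * (norm y * K)" by (simp add: power2_eq_square algebra_simps)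
    thus ?thesis using K(1) by (cases "norm ?z = 0") (auto simp: zero_le_mult_iff)
  qed
  show ?thesis by (rule bounded_linear_intro[OF add sc bd])
qed



lemma weak_meas:
  fixes \<phi> :: "'x \<Rightarrow> 'h::{real_inner,complete_space}"
  assumes k_meas: "(\<lambda>(x, x'). inner (\<phi> x) (\<phi> x')) \<in> borel_measurable (Mx \<Otimes>\<^sub>M Mx)"
  shows "(\<lambda>x. inner (\<phi> x) h) \<in> borel_measurable Mx"
proof -
  define W where "W = {h. (\<lambda>x. inner (\<phi> x) h) \<in> borel_measurable Mx}"
  have subW: "subspace W" unfolding W_def subspace_def
    by (auto simp: inner_add_right)
  have clW: "closed W" unfolding closed_sequential_limits
  proof (intro allI impI)
    fix s l assume a: "(\<forall>n. s n \<in> W) \<and> s \<longlonglongrightarrow> l"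
    show "l \<in> W" unfolding W_def
    proof (safe, rule borel_measurable_LIMSEQ_real)
      fix x show "(\<lambda>i. inner (\<phi> x) (s i)) \<longlonglongrightarrow> inner (\<phi> x) l"
        using a by (intro tendsto_intros) auto
    next
      fix i show "(\<lambda>x. inner (\<phi> x) (s i)) \<in> borel_measurable Mx" using a unfolding W_def by auto
    qed
  qed
  have phiW: "\<phi> x0 \<in> W" if "x0 \<in> space Mx" for x0
  proof -
    have "(\<lambda>x. (\<lambda>(x, x'). inner (\<phi> x) (\<phi> x')) (x, x0)) \<in> borel_measurable Mx"
      by (rule measurable_compose[OF _ k_meas]) (use that in measurable)
    thus ?thesis unfolding W_def by simp
  qed
  note pr = hproj[OF subW clW]
  let ?p = "hproj W h"
  have "(\<lambda>x. inner (\<phi> x) ?p) \<in> borel_measurable Mx" using pr(1) unfolding W_def by simp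
  moreover have "inner (\<phi> x) h = inner (\<phi> x) ?p" if "x \<in> space Mx" for x
  proof -
    have "inner (h - ?p) (\<phi> x) = 0" using pr(2)[OF phiW[OF that]] .
    hence "inner (\<phi> x) (h - ?p) = 0" by (simp only: inner_commute)
    thus ?thesis by (simp add: inner_diff_right)
  qed
  ultimately show ?thesis using measurable_cong by (smt (verit))
qed



lemma prod_le_sq: fixes a b :: real shows "a * b \<le> a\<^sup>2 + b\<^sup>2"
proof -
  have "2*a*b \<le> a\<^sup>2 + b\<^sup>2" by (rule sum_squares_bound)
  moreover have "0 \<le> a\<^sup>2" "0 \<le> b\<^sup>2" by simp_all
  ultimately show ?thesis by linarith
qed

context finite_measure begin

lemma L2_integrable:
  fixes f :: "'a \<Rightarrow> 'b::{banach,second_countable_topology}"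
  assumes [measurable]: "f \<in> borel_measurable M" and i: "integrable M (\<lambda>x. (norm (f x))\<^sup>2)"
  shows "integrable M f"
proof (rule Bochner_Integration.integrable_bound[of _ "\<lambda>x. 1 + (norm (f x))\<^sup>2"])
  show "integrable M (\<lambda>x. 1 + (norm (f x))\<^sup>2)"
    using i by (intro Bochner_Integration.integrable_add integrable_const)
  show "AE x in M. norm (f x) \<le> norm (1 + (norm (f x))\<^sup>2)"
  proof (intro AE_I2)
    fix x
    have "norm (f x) * 1 \<le> (norm (f x))\<^sup>2 + 1\<^sup>2" by (rule prod_le_sq)
    thus "norm (f x) \<le> norm (1 + (norm (f x))\<^sup>2)" by simp
  qed
qed measurable

lemma L2_diff_const:
  fixes f :: "'a \<Rightarrow> 'b::{banach,second_countable_topology,real_inner}"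
  assumes [measurable]: "f \<in> borel_measurable M" and i: "integrable M (\<lambda>x. (norm (f x))\<^sup>2)"
  shows "integrable M (\<lambda>x. (norm (f x - c))\<^sup>2)"
proof (rule Bochner_Integration.integrable_bound[of _ "\<lambda>x. 2 * (norm (f x))\<^sup>2 + 2 * (norm c)\<^sup>2"])
  show "integrable M (\<lambda>x. 2 * (norm (f x))\<^sup>2 + 2 * (norm c)\<^sup>2)"
    using i by (intro Bochner_Integration.integrable_add integrable_const integrable_mult_right)
  show "AE x in M. norm ((norm (f x - c))\<^sup>2) \<le> norm (2 * (norm (f x))\<^sup>2 + 2 * (norm c)\<^sup>2)"
  proof (intro AE_I2)
    fix x
    have t: "norm (f x - c) \<le> norm (f x) + norm c" by (rule norm_triangle_ineq4)
    have "(norm (f x - c))\<^sup>2 \<le> (norm (f x) + norm c)\<^sup>2" using t by (intro power_mono) auto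
    also have "\<dots> = (norm (f x))\<^sup>2 + (norm c)\<^sup>2 + 2 * norm (f x) * norm c" by (simp add: power2_sum)
    also have "\<dots> \<le> 2 * (norm (f x))\<^sup>2 + 2 * (norm c)\<^sup>2"
      using sum_squares_bound[of "norm (f x)" "norm c"] by linarith
    finally show "norm ((norm (f x - c))\<^sup>2) \<le> norm (2 * (norm (f x))\<^sup>2 + 2 * (norm c)\<^sup>2)" by simp
  qed
qed measurable

end

lemma L2_inner_prod:
  fixes f :: "'a \<Rightarrow> 'b::{banach,second_countable_topology,real_inner}"
    and h :: "'a \<Rightarrow> 'c::{banach,second_countable_topology,real_inner}"
  assumes [measurable]: "f \<in> borel_measurable M" and i1: "integrable M (\<lambda>x. (norm (f x))\<^sup>2)"
    and [measurable]: "h \<in> borel_measurable M" and i2: "integrable M (\<lambda>x. (norm (h x))\<^sup>2)"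
  shows "integrable M (\<lambda>x. inner (f x) g * inner (h x) k)"
proof (rule Bochner_Integration.integrable_bound[of _ "\<lambda>x. (norm g * norm k) * ((norm (f x))\<^sup>2 + (norm (h x))\<^sup>2)"])
  show "integrable M (\<lambda>x. (norm g * norm k) * ((norm (f x))\<^sup>2 + (norm (h x))\<^sup>2))"
    using i1 i2 by (intro integrable_mult_right Bochner_Integration.integrable_add)
  show "AE x in M. norm (inner (f x) g * inner (h x) k) \<le> norm ((norm g * norm k) * ((norm (f x))\<^sup>2 + (norm (h x))\<^sup>2))"
  proof (intro AE_I2)
    fix x
    have a: "\<bar>inner (f x) g\<bar> \<le> norm (f x) * norm g" by (rule Cauchy_Schwarz_ineq2)
    have b: "\<bar>inner (h x) k\<bar> \<le> norm (h x) * norm k" by (rule Cauchy_Schwarz_ineq2)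
    have "\<bar>inner (f x) g * inner (h x) k\<bar> \<le> (norm (f x) * norm g) * (norm (h x) * norm k)"
      unfolding abs_mult using a b by (intro mult_mono) auto
    also have "\<dots> = (norm g * norm k) * (norm (f x) * norm (h x))" by simp
    also have "\<dots> \<le> (norm g * norm k) * ((norm (f x))\<^sup>2 + (norm (h x))\<^sup>2)"
      by (intro mult_left_mono prod_le_sq) simp
    finally show "norm (inner (f x) g * inner (h x) k) \<le> norm ((norm g * norm k) * ((norm (f x))\<^sup>2 + (norm (h x))\<^sup>2))"
      by simp
  qed
qed measurable

lemma L2_inner_scaleR:
  fixes f :: "'a \<Rightarrow> 'b::{banach,second_countable_topology,real_inner}"
    and h :: "'a \<Rightarrow> 'c::{banach,second_countable_topology,real_inner}"
  assumes [measurable]: "f \<in> borel_measurable M" and i1: "integrable M (\<lambda>x. (norm (f x))\<^sup>2)"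
    and [measurable]: "h \<in> borel_measurable M" and i2: "integrable M (\<lambda>x. (norm (h x))\<^sup>2)"
  shows "integrable M (\<lambda>x. inner (f x) g *\<^sub>R h x)"
proof (rule Bochner_Integration.integrable_bound[of _ "\<lambda>x. norm g * ((norm (f x))\<^sup>2 + (norm (h x))\<^sup>2)"])
  show "integrable M (\<lambda>x. norm g * ((norm (f x))\<^sup>2 + (norm (h x))\<^sup>2))"
    using i1 i2 by (intro integrable_mult_right Bochner_Integration.integrable_add)
  show "AE x in M. norm (inner (f x) g *\<^sub>R h x) \<le> norm (norm g * ((norm (f x))\<^sup>2 + (norm (h x))\<^sup>2))"
  proof (intro AE_I2)
    fix x
    have a: "\<bar>inner (f x) g\<bar> \<le> norm (f x) * norm g" by (rule Cauchy_Schwarz_ineq2)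
    have "norm (inner (f x) g *\<^sub>R h x) \<le> (norm (f x) * norm g) * norm (h x)"
      using a by (simp add: mult_right_mono)
    also have "\<dots> = norm g * (norm (f x) * norm (h x))" by simp
    also have "\<dots> \<le> norm g * ((norm (f x))\<^sup>2 + (norm (h x))\<^sup>2)"
      by (intro mult_left_mono prod_le_sq) simp
    finally show "norm (inner (f x) g *\<^sub>R h x) \<le> norm (norm g * ((norm (f x))\<^sup>2 + (norm (h x))\<^sup>2))"
      by simp
  qed
qed measurable



theorem mainTheorem17:
  fixes M :: "'w measure" and Mx :: "'x measure" and My :: "'y measure"
    and X :: "'w \<Rightarrow> 'x" and Y :: "'w \<Rightarrow> 'y"
    and \<phi> :: "'x \<Rightarrow> 'h::{real_inner,banach,second_countable_topology}"
    and \<psi> :: "'y \<Rightarrow> 'g::{real_inner,banach,second_countable_topology}"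
    and m :: "'x \<Rightarrow> 'g"
  assumes P: "prob_space M"
    and X_meas: "X \<in> measurable M Mx" and Y_meas: "Y \<in> measurable M My"
    and k_meas: "(\<lambda>(x, x'). inner (\<phi> x) (\<phi> x')) \<in> borel_measurable (Mx \<Otimes>\<^sub>M Mx)"
    and l_meas: "(\<lambda>(y, y'). inner (\<psi> y) (\<psi> y')) \<in> borel_measurable (My \<Otimes>\<^sub>M My)"
    and H_rkhs: "closure (span (range \<phi>)) = UNIV"
    and G_rkhs: "closure (span (range \<psi>)) = UNIV"
    and \<phi>_inj: "inj \<phi>"
    and V_L2: "(\<lambda>\<omega>. \<phi> (X \<omega>)) \<in> borel_measurable M" "integrable M (\<lambda>\<omega>. (norm (\<phi> (X \<omega>)))\<^sup>2)"
    and U_L2: "(\<lambda>\<omega>. \<psi> (Y \<omega>)) \<in> borel_measurable M" "integrable M (\<lambda>\<omega>. (norm (\<psi> (Y \<omega>)))\<^sup>2)"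
    and H_ae: "\<And>h. (AE x in distr M Mx X. inner h (\<phi> x) = 0) \<Longrightarrow> h = 0"
    and m_cond: "is_cond_exp_given M Mx X (\<lambda>\<omega>. \<psi> (Y \<omega>)) m"
    and m_L2: "integrable (distr M Mx X) (\<lambda>x. (norm (m x))\<^sup>2)"
    and B: "\<exists>F c. hilbert_schmidt F \<and> (AE x in distr M Mx X. m x = F (\<phi> x) + c)"
  shows "(\<forall>g. cross_cov M (\<lambda>\<omega>. \<phi> (X \<omega>)) (\<lambda>\<omega>. \<psi> (Y \<omega>)) g
                \<in> mp_dom (cross_cov M (\<lambda>\<omega>. \<phi> (X \<omega>)) (\<lambda>\<omega>. \<phi> (X \<omega>))))
       \<and> bounded_linear (\<lambda>g. mp_inv (cross_cov M (\<lambda>\<omega>. \<phi> (X \<omega>)) (\<lambda>\<omega>. \<phi> (X \<omega>)))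
                                 (cross_cov M (\<lambda>\<omega>. \<phi> (X \<omega>)) (\<lambda>\<omega>. \<psi> (Y \<omega>)) g))
       \<and> (AE \<omega> in M. m (X \<omega>) =
             (LINT \<omega>'|M. \<psi> (Y \<omega>'))
             + adjoint (\<lambda>g. mp_inv (cross_cov M (\<lambda>\<omega>. \<phi> (X \<omega>)) (\<lambda>\<omega>. \<phi> (X \<omega>)))
                                   (cross_cov M (\<lambda>\<omega>. \<phi> (X \<omega>)) (\<lambda>\<omega>. \<psi> (Y \<omega>)) g))
                       (\<phi> (X \<omega>) - (LINT \<omega>'|M. \<phi> (X \<omega>'))))"
proof -
  interpret prob_space M by (rule P)
  define V where "V = (\<lambda>\<omega>. \<phi> (X \<omega>))"
  define U where "U = (\<lambda>\<omega>. \<psi> (Y \<omega>))"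
  define \<mu>V where "\<mu>V = (LINT \<omega>|M. V \<omega>)"
  define \<mu>U where "\<mu>U = (LINT \<omega>|M. U \<omega>)"
  define CV where "CV = cross_cov M V V"
  define CVU where "CVU = cross_cov M V U"
  define V0 where "V0 = (\<lambda>\<omega>. V \<omega> - \<mu>V)"
  define U0 where "U0 = (\<lambda>\<omega>. U \<omega> - \<mu>U)"
  have Vm[measurable]: "V \<in> borel_measurable M" using V_L2(1) unfolding V_def .
  have Um[measurable]: "U \<in> borel_measurable M" using U_L2(1) unfolding U_def .
  have V2: "integrable M (\<lambda>\<omega>. (norm (V \<omega>))\<^sup>2)" using V_L2(2) unfolding V_def .
  have U2: "integrable M (\<lambda>\<omega>. (norm (U \<omega>))\<^sup>2)" using U_L2(2) unfolding U_def .
  have Vi: "integrable M V" by (rule L2_integrable[OF Vm V2])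
  have Ui: "integrable M U" by (rule L2_integrable[OF Um U2])
  have V0m[measurable]: "V0 \<in> borel_measurable M" unfolding V0_def by measurable
  have U0m[measurable]: "U0 \<in> borel_measurable M" unfolding U0_def by measurable
  have V02: "integrable M (\<lambda>\<omega>. (norm (V0 \<omega>))\<^sup>2)" unfolding V0_def by (rule L2_diff_const[OF Vm V2])
  have U02: "integrable M (\<lambda>\<omega>. (norm (U0 \<omega>))\<^sup>2)" unfolding U0_def by (rule L2_diff_const[OF Um U2])
  have V0i: "integrable M V0" by (rule L2_integrable[OF V0m V02])
  have CV_eq: "CV h = (LINT \<omega>|M. inner (V0 \<omega>) h *\<^sub>R V0 \<omega>)" for h
    unfolding CV_def cross_cov_def V0_def \<mu>V_def ..
  have CVU_eq: "CVU g = (LINT \<omega>|M. inner (U0 \<omega>) g *\<^sub>R V0 \<omega>)" for g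
    unfolding CVU_def cross_cov_def V0_def \<mu>V_def U0_def \<mu>U_def ..
  have intCV: "integrable M (\<lambda>\<omega>. inner (V0 \<omega>) h *\<^sub>R V0 \<omega>)" for h
    by (rule L2_inner_scaleR[OF V0m V02 V0m V02])
  have intCVU: "integrable M (\<lambda>\<omega>. inner (U0 \<omega>) g *\<^sub>R V0 \<omega>)" for g
    by (rule L2_inner_scaleR[OF U0m U02 V0m V02])
  have CV_inner: "inner (CV h) k = (LINT \<omega>|M. inner (V0 \<omega>) h * inner (V0 \<omega>) k)" for h k
  proof -
    have "inner (CV h) k = (LINT \<omega>|M. inner (inner (V0 \<omega>) h *\<^sub>R V0 \<omega>) k)"
      unfolding CV_eq by (rule integral_inner_left[symmetric]) (rule intCV)
    thus ?thesis by simp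
  qed
  have CVU_inner: "inner (CVU g) k = (LINT \<omega>|M. inner (U0 \<omega>) g * inner (V0 \<omega>) k)" for g k
  proof -
    have "inner (CVU g) k = (LINT \<omega>|M. inner (inner (U0 \<omega>) g *\<^sub>R V0 \<omega>) k)"
      unfolding CVU_eq by (rule integral_inner_left[symmetric]) (rule intCVU)
    thus ?thesis by simp
  qed
  have CV_bl: "bounded_linear CV"
  proof (rule bounded_linear_intro)
    fix x y
    have "CV (x + y) = (LINT \<omega>|M. inner (V0 \<omega>) x *\<^sub>R V0 \<omega> + inner (V0 \<omega>) y *\<^sub>R V0 \<omega>)"
      unfolding CV_eq by (simp add: inner_add_right scaleR_add_left)
    also have "\<dots> = CV x + CV y" unfolding CV_eq by (rule Bochner_Integration.integral_add[OF intCV intCV])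
    finally show "CV (x + y) = CV x + CV y" .
  next
    fix r x
    have "CV (r *\<^sub>R x) = (LINT \<omega>|M. r *\<^sub>R (inner (V0 \<omega>) x *\<^sub>R V0 \<omega>))"
      unfolding CV_eq by simp
    also have "\<dots> = r *\<^sub>R CV x" unfolding CV_eq by (rule integral_scaleR_right)
    finally show "CV (r *\<^sub>R x) = r *\<^sub>R CV x" .
  next
    fix x
    have "norm (CV x) \<le> (LINT \<omega>|M. norm (inner (V0 \<omega>) x *\<^sub>R V0 \<omega>))"
      unfolding CV_eq by (rule integral_norm_bound)
    also have "\<dots> \<le> (LINT \<omega>|M. norm x * (norm (V0 \<omega>))\<^sup>2)"
    proof (rule integral_mono)
      show "integrable M (\<lambda>\<omega>. norm (inner (V0 \<omega>) x *\<^sub>R V0 \<omega>))" using intCV by (rule integrable_norm)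
      show "integrable M (\<lambda>\<omega>. norm x * (norm (V0 \<omega>))\<^sup>2)" using V02 by (rule integrable_mult_right)
      fix \<omega>
      have "\<bar>inner (V0 \<omega>) x\<bar> \<le> norm (V0 \<omega>) * norm x" by (rule Cauchy_Schwarz_ineq2)
      hence "\<bar>inner (V0 \<omega>) x\<bar> * norm (V0 \<omega>) \<le> norm (V0 \<omega>) * norm x * norm (V0 \<omega>)"
        by (simp add: mult_right_mono)
      thus "norm (inner (V0 \<omega>) x *\<^sub>R V0 \<omega>) \<le> norm x * (norm (V0 \<omega>))\<^sup>2"
        by (simp add: power2_eq_square algebra_simps)
    qed
    also have "\<dots> = norm x * (LINT \<omega>|M. (norm (V0 \<omega>))\<^sup>2)" by simp
    finally show "norm (CV x) \<le> norm x * (LINT \<omega>|M. (norm (V0 \<omega>))\<^sup>2)" .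
  qed
  interpret CV: bounded_linear CV by (rule CV_bl)
  define K where "K = CV -` {0}"
  have subK: "subspace K" unfolding K_def subspace_def by (simp add: CV.add CV.scale)
  have clK: "closed K" unfolding K_def
    by (intro closed_vimage closed_singleton) (rule linear_continuous_on, rule CV_bl)
  note hK = hproj[OF subK clK]
  define Pr where "Pr = (\<lambda>v. v - hproj K v)"
  have Pr_bl: "bounded_linear Pr" unfolding Pr_def
    by (intro bounded_linear_sub bounded_linear_ident hproj_linear[OF subK clK])
  have Pr_sym: "inner (Pr a) b = inner a (Pr b)" for a b
  proof -
    have 1: "inner (a - hproj K a) (hproj K b) = 0" by (rule hK(2)[OF hK(1)])
    have 2: "inner (b - hproj K b) (hproj K a) = 0" by (rule hK(2)[OF hK(1)])
    have "inner (Pr a) b = inner (Pr a) (Pr b) + inner (a - hproj K a) (hproj K b)"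
      unfolding Pr_def by (simp add: inner_diff_right)
    also have "\<dots> = inner (Pr a) (Pr b)" using 1 by simp
    also have "\<dots> = inner a (Pr b) - inner (hproj K a) (b - hproj K b)"
      unfolding Pr_def by (simp add: inner_diff_left)
    also have "inner (hproj K a) (b - hproj K b) = 0" using 2 by (simp add: inner_commute)
    finally show ?thesis by simp
  qed
  have mp_inv_CV: "mp_inv CV (CV h) = Pr h" for h
    unfolding mp_inv_def
  proof (rule the_equality)
    show "Pr h \<in> orthogonal_comp (CV -` {0}) \<and> CV h - CV (Pr h) \<in> orthogonal_comp (range CV)"
    proof
      show "Pr h \<in> orthogonal_comp (CV -` {0})"
        unfolding orthogonal_comp_def orthogonal_def Pr_def
        using hK(2)[of _ h] unfolding K_def by (simp add: inner_commute)
      have "CV h - CV (Pr h) = 0" unfolding Pr_def using hK(1)[of h] unfolding K_def by (simp add: CV.diff)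
      thus "CV h - CV (Pr h) \<in> orthogonal_comp (range CV)"
        unfolding orthogonal_comp_def orthogonal_def by simp
    qed
  next
    fix x assume a: "x \<in> orthogonal_comp (CV -` {0}) \<and> CV h - CV x \<in> orthogonal_comp (range CV)"
    have "CV h - CV x \<in> orthogonal_comp (range CV)" using a by blast
    hence "inner (CV (h - x)) (CV h - CV x) = 0" unfolding orthogonal_comp_def orthogonal_def by blast
    hence "inner (CV h - CV x) (CV h - CV x) = 0" by (simp add: CV.diff)
    hence "CV (h - x) = 0" by (simp add: CV.diff)
    hence hx: "h - x \<in> K" unfolding K_def by simp
    have xK: "x \<in> orthogonal_comp K" using a unfolding K_def by simp
    have PK: "Pr h \<in> orthogonal_comp K"
      unfolding orthogonal_comp_def orthogonal_def Pr_def using hK(2)[of _ h] by (simp add: inner_commute)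
    have d1: "x - Pr h \<in> orthogonal_comp K"
      using subspace_diff[OF subspace_orthogonal_comp xK PK] .
    have d2: "x - Pr h \<in> K"
    proof -
      have eq: "x - Pr h = hproj K h - (h - x)" unfolding Pr_def by (simp add: algebra_simps)
      show ?thesis unfolding eq by (rule subspace_diff[OF subK hK(1)[of h] hx])
    qed
    have "inner (x - Pr h) (x - Pr h) = 0" using d1 d2 unfolding orthogonal_comp_def orthogonal_def by blast
    thus "x = Pr h" by simp
  qed
  obtain F c where HS: "hilbert_schmidt F" and Fae: "AE x in distr M Mx X. m x = F (\<phi> x) + c"
    using B by blast
  have F_bl: "bounded_linear F" using HS unfolding hilbert_schmidt_def by blast
  interpret F: bounded_linear F by (rule F_bl)
  define Fa where "Fa = adjoint F"
  have Fa: "inner (F x) y = inner x (Fa y)" for x y unfolding Fa_def by (rule adjoint_exists[OF F_bl])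
  have Fa_bl: "bounded_linear Fa" unfolding Fa_def by (rule adjoint_bounded_linear[OF F_bl])
  have m_meas[measurable]: "m \<in> borel_measurable Mx" using m_cond unfolding is_cond_exp_given_def by blast
  have m_id: "\<And>A. A \<in> sets Mx \<Longrightarrow> (LINT \<omega>|M. indicator A (X \<omega>) *\<^sub>R U \<omega>) = (LINT \<omega>|M. indicator A (X \<omega>) *\<^sub>R m (X \<omega>))"
    using m_cond unfolding is_cond_exp_given_def U_def by blast
  have Xm[measurable]: "X \<in> measurable M Mx" by (rule X_meas)
  have mX2: "integrable M (\<lambda>\<omega>. (norm (m (X \<omega>)))\<^sup>2)"
    using m_L2 by (subst (asm) integrable_distr_eq) auto
  have mXi: "integrable M (\<lambda>\<omega>. m (X \<omega>))" by (rule L2_integrable) (auto intro: mX2)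
  have FV_meas[measurable]: "(\<lambda>\<omega>. F (V \<omega>)) \<in> borel_measurable M"
    by (rule measurable_compose[OF Vm borel_measurable_continuous_onI[OF linear_continuous_on[OF F_bl]]])
  have mAE: "AE \<omega> in M. m (X \<omega>) = F (V \<omega>) + c"
    using AE_distrD[OF X_meas Fae] unfolding V_def .
  have muU: "\<mu>U = F \<mu>V + c"
  proof -
    have "\<mu>U = (LINT \<omega>|M. indicator (space Mx) (X \<omega>) *\<^sub>R U \<omega>)"
      unfolding \<mu>U_def by (rule Bochner_Integration.integral_cong) (auto simp: measurable_space[OF X_meas])
    also have "\<dots> = (LINT \<omega>|M. indicator (space Mx) (X \<omega>) *\<^sub>R m (X \<omega>))" by (rule m_id) simp
    also have "\<dots> = (LINT \<omega>|M. m (X \<omega>))"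
      by (rule Bochner_Integration.integral_cong) (auto simp: measurable_space[OF X_meas])
    also have "\<dots> = (LINT \<omega>|M. F (V \<omega>) + c)"
      by (rule integral_cong_AE) (use mAE in auto)
    also have "\<dots> = (LINT \<omega>|M. F (V \<omega>)) + (LINT \<omega>|M. c)"
      by (rule Bochner_Integration.integral_add) (auto intro: integrable_bounded_linear[OF F_bl Vi])
    also have "(LINT \<omega>|M. F (V \<omega>)) = F \<mu>V" unfolding \<mu>V_def by (rule integral_bounded_linear[OF F_bl Vi])
    also have "(LINT \<omega>|M. c) = c" by (simp add: prob_space)
    finally show ?thesis .
  qed
  have mAE0: "AE \<omega> in M. m (X \<omega>) - \<mu>U = F (V0 \<omega>)"
    using mAE by eventually_elim (simp add: muU V0_def F.diff)
  define Fs where "Fs = vimage_algebra (space M) X Mx"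
  have Xf: "X \<in> space M \<rightarrow> space Mx" using measurable_space[OF X_meas] by auto
  have sets_Fs: "sets Fs = {X -` A \<inter> space M | A. A \<in> sets Mx}"
    unfolding Fs_def by (rule sets_vimage_algebra2[OF Xf])
  have subalg: "subalgebra M Fs" unfolding subalgebra_def
  proof
    show "space Fs = space M" unfolding Fs_def by simp
    show "sets Fs \<subseteq> sets M" unfolding sets_Fs using measurable_sets[OF X_meas] by auto
  qed
  interpret FS: finite_measure_subalgebra M Fs
    by (intro finite_measure_subalgebra.intro finite_measure_axioms)
       (simp add: finite_measure_subalgebra_axioms_def subalg)
  have XF[measurable]: "X \<in> measurable Fs Mx" unfolding Fs_def by (rule measurable_vimage_algebra1[OF Xf])
  have tower: "(LINT \<omega>|M. inner (V0 \<omega>) k * inner (U \<omega>) g) = (LINT \<omega>|M. inner (V0 \<omega>) k * inner (m (X \<omega>)) g)" for g k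
  proof -
    define u where "u = (\<lambda>\<omega>. inner (U \<omega>) g)"
    define w where "w = (\<lambda>\<omega>. inner (m (X \<omega>)) g)"
    define a where "a = (\<lambda>\<omega>. inner (\<phi> (X \<omega>)) k - inner \<mu>V k)"
    have a_eq: "a \<omega> = inner (V0 \<omega>) k" for \<omega> by (simp add: a_def V0_def V_def inner_diff_left)
    have wk: "(\<lambda>x. inner (\<phi> x) k) \<in> borel_measurable Mx" by (rule weak_meas[OF k_meas])
    have am: "a \<in> borel_measurable Fs" unfolding a_def
      using measurable_compose[OF XF wk] by measurable
    have um: "u \<in> borel_measurable M" unfolding u_def by measurable
    have wm: "w \<in> borel_measurable Fs" unfolding w_def by measurable
    have ui: "integrable M u" unfolding u_def using Ui by simp
    have wi: "integrable M w" unfolding w_def using mXi by simp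
    have setint: "(\<integral>\<omega>\<in>A. u \<omega> \<partial>M) = (\<integral>\<omega>\<in>A. w \<omega> \<partial>M)" if A: "A \<in> sets Fs" for A
    proof -
      obtain B where B: "B \<in> sets Mx" "A = X -` B \<inter> space M" using A sets_Fs by auto
      have ind: "indicator A \<omega> = indicator B (X \<omega>)" if "\<omega> \<in> space M" for \<omega> :: 'w
        using B(2) that by (auto simp: indicator_def)
      have mU: "(\<lambda>\<omega>. indicator B (X \<omega>) *\<^sub>R U \<omega>) \<in> borel_measurable M" using B(1) by measurable
      have iU: "integrable M (\<lambda>\<omega>. indicator B (X \<omega>) *\<^sub>R U \<omega>)"
        by (rule Bochner_Integration.integrable_bound[OF Ui mU]) (auto simp: indicator_def)
      have mM: "(\<lambda>\<omega>. indicator B (X \<omega>) *\<^sub>R m (X \<omega>)) \<in> borel_measurable M" using B(1) by measurable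
      have iM: "integrable M (\<lambda>\<omega>. indicator B (X \<omega>) *\<^sub>R m (X \<omega>))"
        by (rule Bochner_Integration.integrable_bound[OF mXi mM]) (auto simp: indicator_def)
      have "(\<integral>\<omega>\<in>A. u \<omega> \<partial>M) = (LINT \<omega>|M. inner (indicator B (X \<omega>) *\<^sub>R U \<omega>) g)"
        unfolding set_lebesgue_integral_def u_def by (rule Bochner_Integration.integral_cong) (auto simp: ind)
      also have "\<dots> = inner (LINT \<omega>|M. indicator B (X \<omega>) *\<^sub>R U \<omega>) g"
        by (rule integral_inner_left) (rule iU)
      also have "\<dots> = inner (LINT \<omega>|M. indicator B (X \<omega>) *\<^sub>R m (X \<omega>)) g"
        using m_id[OF B(1)] by simp
      also have "\<dots> = (LINT \<omega>|M. inner (indicator B (X \<omega>) *\<^sub>R m (X \<omega>)) g)"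
        by (rule integral_inner_left[symmetric]) (rule iM)
      also have "\<dots> = (\<integral>\<omega>\<in>A. w \<omega> \<partial>M)"
        unfolding set_lebesgue_integral_def w_def by (rule Bochner_Integration.integral_cong) (auto simp: ind)
      finally show ?thesis .
    qed
    have ce: "AE \<omega> in M. real_cond_exp M Fs u \<omega> = w \<omega>"
      by (rule FS.real_cond_exp_charact[OF setint ui wi wm])
    have iau: "integrable M (\<lambda>\<omega>. a \<omega> * u \<omega>)"
      unfolding a_eq u_def by (rule L2_inner_prod[OF V0m V02 Um U2])
    have "(LINT \<omega>|M. a \<omega> * real_cond_exp M Fs u \<omega>) = (LINT \<omega>|M. a \<omega> * u \<omega>)"
      by (rule FS.real_cond_exp_intg(2)[OF iau am um])
    moreover have "(LINT \<omega>|M. a \<omega> * real_cond_exp M Fs u \<omega>) = (LINT \<omega>|M. a \<omega> * w \<omega>)"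
    proof (rule integral_cong_AE)
      have [measurable]: "a \<in> borel_measurable M" by (rule measurable_from_subalg[OF subalg am])
      have [measurable]: "w \<in> borel_measurable M" by (rule measurable_from_subalg[OF subalg wm])
      show "(\<lambda>\<omega>. a \<omega> * real_cond_exp M Fs u \<omega>) \<in> borel_measurable M" by measurable
      show "(\<lambda>\<omega>. a \<omega> * w \<omega>) \<in> borel_measurable M" by measurable
      show "AE \<omega> in M. a \<omega> * real_cond_exp M Fs u \<omega> = a \<omega> * w \<omega>" using ce by eventually_elim simp
    qed
    ultimately have "(LINT \<omega>|M. a \<omega> * u \<omega>) = (LINT \<omega>|M. a \<omega> * w \<omega>)" by simp
    thus ?thesis unfolding a_eq u_def w_def .
  qed
  have CVU_CV: "CVU g = CV (Fa g)" for g
  proof (rule vector_eq_rdot[THEN iffD1], rule allI)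
    fix k
    have i1: "integrable M (\<lambda>\<omega>. inner (V0 \<omega>) k * inner (U \<omega>) g)" by (rule L2_inner_prod[OF V0m V02 Um U2])
    have i2: "integrable M (\<lambda>\<omega>. inner (V0 \<omega>) k * inner (m (X \<omega>)) g)"
      by (rule L2_inner_prod[OF V0m V02 _ mX2]) measurable
    have i3: "integrable M (\<lambda>\<omega>. inner (V0 \<omega>) k * inner \<mu>U g)"
      using V0i by (intro integrable_mult_left integrable_inner_left)
    have "inner (CVU g) k = (LINT \<omega>|M. inner (V0 \<omega>) k * inner (U \<omega>) g - inner (V0 \<omega>) k * inner \<mu>U g)"
      unfolding CVU_inner U0_def by (rule Bochner_Integration.integral_cong) (auto simp: inner_diff_left algebra_simps)
    also have "\<dots> = (LINT \<omega>|M. inner (V0 \<omega>) k * inner (U \<omega>) g) - (LINT \<omega>|M. inner (V0 \<omega>) k * inner \<mu>U g)"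
      by (rule Bochner_Integration.integral_diff[OF i1 i3])
    also have "\<dots> = (LINT \<omega>|M. inner (V0 \<omega>) k * inner (m (X \<omega>)) g) - (LINT \<omega>|M. inner (V0 \<omega>) k * inner \<mu>U g)"
      by (simp add: tower)
    also have "\<dots> = (LINT \<omega>|M. inner (V0 \<omega>) k * inner (m (X \<omega>)) g - inner (V0 \<omega>) k * inner \<mu>U g)"
      by (rule Bochner_Integration.integral_diff[OF i2 i3, symmetric])
    also have "\<dots> = (LINT \<omega>|M. inner (V0 \<omega>) k * inner (m (X \<omega>) - \<mu>U) g)"
      by (rule Bochner_Integration.integral_cong) (auto simp: inner_diff_left algebra_simps)
    also have "\<dots> = (LINT \<omega>|M. inner (V0 \<omega>) (Fa g) * inner (V0 \<omega>) k)"
      by (rule integral_cong_AE) (use mAE0 in \<open>auto simp: Fa\<close>)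
    also have "\<dots> = inner (CV (Fa g)) k" by (rule CV_inner[symmetric])
    finally show "inner (CVU g) k = inner (CV (Fa g)) k" .
  qed
  have projAE: "AE \<omega> in M. hproj K (V0 \<omega>) = 0"
  proof -
    obtain D where D: "countable D" "D \<subseteq> K" "K \<subseteq> closure D" using separable[of K] by blast
    have z: "AE \<omega> in M. inner (V0 \<omega>) d = 0" if "d \<in> K" for d
    proof -
      have "CV d = 0" using that unfolding K_def by simp
      hence e0: "(LINT \<omega>|M. inner (V0 \<omega>) d * inner (V0 \<omega>) d) = 0" using CV_inner[of d d] by simp
      have int: "integrable M (\<lambda>\<omega>. inner (V0 \<omega>) d * inner (V0 \<omega>) d)" by (rule L2_inner_prod[OF V0m V02 V0m V02])
      have nn: "AE \<omega> in M. 0 \<le> inner (V0 \<omega>) d * inner (V0 \<omega>) d" by simp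
      have "AE \<omega> in M. inner (V0 \<omega>) d * inner (V0 \<omega>) d = 0"
        using integral_nonneg_eq_0_iff_AE[OF int nn] e0 by simp
      thus ?thesis by eventually_elim simp
    qed
    have "AE \<omega> in M. \<forall>d\<in>D. inner (V0 \<omega>) d = 0"
      using D(1) D(2) z by (intro AE_ball_countable') auto
    thus ?thesis
    proof eventually_elim
      case (elim \<omega>)
      let ?q = "hproj K (V0 \<omega>)"
      have "closed {y. inner (V0 \<omega>) y = 0}" by (intro closed_Collect_eq continuous_intros)
      moreover have "D \<subseteq> {y. inner (V0 \<omega>) y = 0}" using elim by auto
      ultimately have "closure D \<subseteq> {y. inner (V0 \<omega>) y = 0}" by (intro closure_minimal)
      hence q0: "inner (V0 \<omega>) ?q = 0" using D(3) hK(1) by blast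
      have "inner (V0 \<omega> - ?q) ?q = 0" by (rule hK(2)[OF hK(1)])
      hence "inner ?q ?q = 0" using q0 by (simp add: inner_diff_left)
      thus "?q = 0" by simp
    qed
  qed
  define T where "T = (\<lambda>g. mp_inv CV (CVU g))"
  have T_eq: "T = (\<lambda>g. Pr (Fa g))" unfolding T_def by (rule ext) (simp add: CVU_CV mp_inv_CV)
  have T_bl: "bounded_linear T" unfolding T_eq
    using bounded_linear_compose[OF Pr_bl Fa_bl] by (simp add: o_def)
  have adjT: "adjoint T = (\<lambda>v. F (Pr v))"
  proof (rule adjoint_unique, intro allI)
    fix x y
    have "inner (T x) y = inner (Fa x) (Pr y)" unfolding T_eq by (rule Pr_sym)
    also have "\<dots> = inner (Pr y) (Fa x)" by (rule inner_commute)
    also have "\<dots> = inner (F (Pr y)) x" by (rule Fa[symmetric])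
    also have "\<dots> = inner x (F (Pr y))" by (rule inner_commute)
    finally show "inner (T x) y = inner x (F (Pr y))" .
  qed
  have dom: "\<forall>g. CVU g \<in> mp_dom CV"
  proof
    fix g
    have "CVU g = CV (Fa g) + 0" by (simp add: CVU_CV)
    moreover have "(0::'h) \<in> orthogonal_comp (range CV)" unfolding orthogonal_comp_def orthogonal_def by simp
    ultimately show "CVU g \<in> mp_dom CV" unfolding mp_dom_def by blast
  qed
  have final: "AE \<omega> in M. m (X \<omega>) = \<mu>U + adjoint T (V \<omega> - \<mu>V)"
    using mAE0 projAE
  proof eventually_elim
    case (elim \<omega>)
    have pr: "Pr (V0 \<omega>) = V0 \<omega>" unfolding Pr_def using elim(2) by simp
    have e1: "m (X \<omega>) = \<mu>U + F (V0 \<omega>)" using elim(1) by (simp add: algebra_simps)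
    have "adjoint T (V \<omega> - \<mu>V) = F (Pr (V0 \<omega>))" unfolding adjT by (simp add: V0_def)
    also have "\<dots> = F (V0 \<omega>)" using pr by (rule arg_cong)
    finally show ?case using e1 by simp
  qed
  show ?thesis
    using dom T_bl final unfolding T_def CVU_def CV_def V_def U_def \<mu>U_def \<mu>V_def by simp
qed


end
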